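(* Let $N\ge 1$ and let $\nu$ be a nonzero finite positive Borel measure on the unit circle $\mathbb T=\{z\in\mathbb C:|z|=1\}$. Put $m_k=\int_{\mathbb T} z^k\,d\nu(z)$ for $k=0,1,\dots,N$. Then there exists a unique $r\in[0,1]$ for which there exist an integer $1\le n\le N$, weights $\rho_1,\dots,\rho_n>0$ and angles $\phi_1,\dots,\phi_n\in[-\pi,\pi)$ satisfying $$m_k=r^k\sum_{\alpha=1}^n\rho_\alpha e^{ik\phi_\alpha},\qquad k=0,1,\dots,N$$ (with the convention $r^0=1$; equivalently one may use $N$ nodes with the surplus weights equal to zero). Moreover, for this $r$ the quantity $$\hat m_{N+1}=r^{N+1}\sum_{\alpha=1}^n\rho_\alpha e^{i(N+1)\phi_\alpha}$$ (and likewise any other quantity computed from the ansatz $f_N(\theta)=\sum_\alpha\rho_\alpha P_r(\phi_\alpha-\theta)$) is uniquely determined by $(m_0,\dots,m_N)$.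
   Context: For $0\le r<1$ the Poisson kernel is $P_r(\theta)=\frac{1}{2\pi}\frac{1-r^2}{1-2r\cos\theta+r^2}=\frac1{2\pi}\sum_{k\in\mathbb Z}r^{|k|}e^{ik\theta}$; it satisfies $\int_{-\pi}^{\pi}e^{ik\theta}P_r(\phi-\theta)\,d\theta=r^ke^{ik\phi}$ for $k\ge0$, and as $r\to1$ it tends to the Dirac mass at $0$ (so for $r=1$ the ansatz is the atomic measure $\sum_\alpha\rho_\alpha\delta_{\phi_\alpha}$). *)

theory Defs
  imports "HOL-Analysis.Analysis"
begin

definition circle_moment :: "complex measure \<Rightarrow> nat \<Rightarrow> complex" where
  "circle_moment \<nu> k = (LINT z|\<nu>. z ^ k)"

definition ansatz_coeff :: "real \<Rightarrow> nat \<Rightarrow> (nat \<Rightarrow> real) \<Rightarrow> (nat \<Rightarrow> real) \<Rightarrow> nat \<Rightarrow> complex" where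
  "ansatz_coeff r n \<rho> \<phi> k =
     complex_of_real (r ^ k) * (\<Sum>\<alpha>=1..n. complex_of_real (\<rho> \<alpha>) * exp (\<i> * of_nat k * complex_of_real (\<phi> \<alpha>)))"

definition circle_rep :: "nat \<Rightarrow> complex measure \<Rightarrow> real \<Rightarrow> nat \<Rightarrow> (nat \<Rightarrow> real) \<Rightarrow> (nat \<Rightarrow> real) \<Rightarrow> bool" where
  "circle_rep N \<nu> r n \<rho> \<phi> \<longleftrightarrow>
     1 \<le> n \<and> n \<le> N \<and>
     (\<forall>\<alpha>\<in>{1..n}. \<rho> \<alpha> > 0 \<and> \<phi> \<alpha> \<in> {-pi..<pi}) \<and>
     (\<forall>k\<le>N. circle_moment \<nu> k = ansatz_coeff r n \<rho> \<phi> k)"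

end

theory Submission
  imports Defs "HOL-Computational_Algebra.Fundamental_Theorem_Algebra"
begin


definition QF :: "(int \<Rightarrow> complex) \<Rightarrow> nat \<Rightarrow> (nat \<Rightarrow> complex) \<Rightarrow> (nat \<Rightarrow> complex) \<Rightarrow> complex" where
  "QF c N d e = (\<Sum>i\<le>N. \<Sum>j\<le>N. cnj (d i) * e j * c (int j - int i))"

definition herm :: "(int \<Rightarrow> complex) \<Rightarrow> bool" where
  "herm c \<longleftrightarrow> (\<forall>k. c (-k) = cnj (c k))"

definition Bf :: "(int \<Rightarrow> complex) \<Rightarrow> nat \<Rightarrow> complex poly \<Rightarrow> complex poly \<Rightarrow> complex" where
  "Bf c N p q = QF c N (coeff p) (coeff q)"

lemma Bf_add_left: "Bf c N (p + q) w = Bf c N p w + Bf c N q w"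
  by (simp add: Bf_def QF_def algebra_simps sum.distrib)

lemma Bf_add_right: "Bf c N w (p + q) = Bf c N w p + Bf c N w q"
  by (simp add: Bf_def QF_def algebra_simps sum.distrib)

lemma Bf_diff_left: "Bf c N (p - q) w = Bf c N p w - Bf c N q w"
  by (simp add: Bf_def QF_def algebra_simps sum_subtractf)

lemma Bf_diff_right: "Bf c N w (p - q) = Bf c N w p - Bf c N w q"
  by (simp add: Bf_def QF_def algebra_simps sum_subtractf)

lemma Bf_smult_left: "Bf c N (smult a p) w = cnj a * Bf c N p w"
  by (simp add: Bf_def QF_def algebra_simps sum_distrib_left)

lemma Bf_smult_right: "Bf c N w (smult a p) = a * Bf c N w p"
  by (simp add: Bf_def QF_def algebra_simps sum_distrib_left)

lemma Bf_zero_left: "Bf c N 0 w = 0"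
  by (simp add: Bf_def QF_def)

lemma Bf_zero_right: "Bf c N w 0 = 0"
  by (simp add: Bf_def QF_def)

lemma Bf_sum_left: "Bf c N (sum f A) w = (\<Sum>x\<in>A. Bf c N (f x) w)"
proof (cases "finite A")
  case True
  then show ?thesis by (induction A rule: finite_induct) (simp_all add: Bf_add_left Bf_zero_left)
qed (simp add: Bf_zero_left)

lemma Bf_sum_right: "Bf c N w (sum f A) = (\<Sum>x\<in>A. Bf c N w (f x))"
proof (cases "finite A")
  case True
  then show ?thesis by (induction A rule: finite_induct) (simp_all add: Bf_add_right Bf_zero_right)
qed (simp add: Bf_zero_right)

lemma QF_cnj:
  assumes "herm c"
  shows "cnj (QF c N d e) = QF c N e d"
proof -
  have hc: "cnj (c (int j - int i)) = c (int i - int j)" for i j :: nat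
    using assms unfolding herm_def by (metis minus_diff_eq complex_cnj_cnj)
  have "cnj (QF c N d e) = (\<Sum>i\<le>N. \<Sum>j\<le>N. d i * cnj (e j) * c (int i - int j))"
    unfolding QF_def cnj_sum complex_cnj_mult complex_cnj_cnj hc ..
  also have "\<dots> = QF c N e d"
    unfolding QF_def
    by (subst sum.swap, rule sum.cong[OF refl], rule sum.cong[OF refl]) (simp add: mult_ac)
  finally show ?thesis .
qed

lemma Bf_cnj: "herm c \<Longrightarrow> cnj (Bf c N p q) = Bf c N q p"
  by (simp add: Bf_def QF_cnj)

lemma Bf_real: "herm c \<Longrightarrow> Im (Bf c N p p) = 0"
  using Bf_cnj[of c N p p] by (metis Reals_cnj_iff complex_is_Real_iff)

lemma QF_shift:
  assumes "\<forall>i>M. d i = 0" "\<forall>i>M. e i = 0"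
  shows "QF c (Suc M) (\<lambda>i. case i of 0 \<Rightarrow> 0 | Suc m \<Rightarrow> d m) (\<lambda>i. case i of 0 \<Rightarrow> 0 | Suc m \<Rightarrow> e m)
       = QF c (Suc M) d e"
proof -
  have "QF c (Suc M) (\<lambda>i. case i of 0 \<Rightarrow> 0 | Suc m \<Rightarrow> d m) (\<lambda>i. case i of 0 \<Rightarrow> 0 | Suc m \<Rightarrow> e m)
      = (\<Sum>i\<le>M. \<Sum>j\<le>M. cnj (d i) * e j * c (int j - int i))"
    unfolding QF_def by (simp del: sum.atMost_Suc add: sum.atMost_Suc_shift)
  also have "\<dots> = QF c (Suc M) d e"
    unfolding QF_def using assms by (simp add: sum.atMost_Suc)
  finally show ?thesis .
qed

lemma Bf_shift:
  assumes "degree p < N" "degree q < N"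
  shows "Bf c N (pCons 0 p) (pCons 0 q) = Bf c N p q"
proof -
  obtain M where M: "N = Suc M" using assms(1) by (cases N) auto
  have e1: "coeff (pCons 0 p) = (\<lambda>i. case i of 0 \<Rightarrow> 0 | Suc m \<Rightarrow> coeff p m)"
    by (auto simp: coeff_pCons fun_eq_iff split: nat.splits)
  have e2: "coeff (pCons 0 q) = (\<lambda>i. case i of 0 \<Rightarrow> 0 | Suc m \<Rightarrow> coeff q m)"
    by (auto simp: coeff_pCons fun_eq_iff split: nat.splits)
  show ?thesis unfolding Bf_def M e1 e2
    by (rule QF_shift) (use assms M in \<open>auto intro: coeff_eq_0\<close>)
qed

lemma Bf_CS:
  assumes h: "herm c" and psd: "\<forall>w. degree w \<le> N \<longrightarrow> 0 \<le> Re (Bf c N w w)"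
    and p: "degree p \<le> N" "Bf c N p p = 0" and q: "degree q \<le> N"
  shows "Bf c N p q = 0"
proof (rule ccontr)
  define b where "b = Bf c N p q"
  assume "Bf c N p q \<noteq> 0"
  hence b0: "cmod b ^ 2 > 0" by (simp add: b_def)
  define Q where "Q = Re (Bf c N q q)"
  have Q0: "Q \<ge> 0" using psd q by (simp add: Q_def)
  have QX: "Bf c N q q = of_real Q" using Bf_real[OF h, of N q] unfolding Q_def
    by (simp add: complex_eq_iff)
  define t where "t = 1 / (Q + 1)"
  have t0: "t > 0" using Q0 by (simp add: t_def)
  have tQ: "t * Q < 1" using Q0 by (simp add: t_def field_simps)
  define a where "a = - of_real t * cnj b"
  define u where "u = p + smult a q"
  have du: "degree u \<le> N" unfolding u_def using p q
    by (meson degree_add_le degree_smult_le order.trans)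
  have qp: "Bf c N q p = cnj b" using Bf_cnj[OF h, of N p q] by (simp add: b_def)
  have "Bf c N u u = Bf c N p p + a * b + cnj a * cnj b + cnj a * a * Bf c N q q"
    unfolding u_def by (simp add: Bf_add_left Bf_add_right Bf_smult_left Bf_smult_right b_def qp algebra_simps)
  also have "\<dots> = of_real (t * cmod b ^ 2 * (t * Q - 2))"
    unfolding a_def p QX using complex_norm_square[of b]
    by (simp add: algebra_simps power2_eq_square)
  finally have "Re (Bf c N u u) = t * cmod b ^ 2 * (t * Q - 2)" by simp
  also have "\<dots> < 0" using t0 b0 tQ by (intro mult_pos_neg) auto
  finally have "Re (Bf c N u u) < 0" .
  moreover have "0 \<le> Re (Bf c N u u)" using psd du by blast
  ultimately show False by linarith
qed


lemma Bf_monom: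
  "Bf c N (monom a i) (monom b j) = (if i \<le> N \<and> j \<le> N then cnj a * b * c (int j - int i) else 0)"
proof -
  have "Bf c N (monom a i) (monom b j) =
        (\<Sum>i'\<le>N. \<Sum>j'\<le>N. (if j' = j then (if i' = i then cnj a * b * c (int j - int i) else 0) else 0))"
    unfolding Bf_def QF_def coeff_monom by (intro sum.cong refl) auto
  also have "\<dots> = (if i \<le> N \<and> j \<le> N then cnj a * b * c (int j - int i) else 0)"
    by (cases "j \<le> N") (simp_all add: sum.delta')
  finally show ?thesis .
qed

lemma Bf_null_shift:
  assumes h: "herm c" and psd: "\<forall>w. degree w \<le> N \<longrightarrow> 0 \<le> Re (Bf c N w w)"
    and p: "p \<noteq> 0" "degree p \<le> N" "Bf c N p p = 0"
  shows "m + degree p \<le> N \<Longrightarrow> degree w \<le> N \<Longrightarrow> Bf c N (monom 1 m * p) w = 0"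
proof (induction m arbitrary: w)
  case 0
  then show ?case using Bf_CS[OF h psd p(2,3)] by (simp add: monom_0 one_pCons[symmetric])
next
  case (Suc m)
  define x where "x = monom 1 m * p"
  have dx: "degree x = m + degree p" unfolding x_def using p
    by (simp add: degree_mult_eq degree_monom_eq)
  have xx: "Bf c N x x = 0" using Suc.IH[of x] Suc.prems dx by (simp add: x_def)
  have e: "monom 1 (Suc m) * p = pCons 0 x"
    by (simp add: x_def monom_Suc)
  have "Bf c N (pCons 0 x) (pCons 0 x) = 0"
    using Bf_shift[of x N x c] dx Suc.prems xx by simp
  moreover have "degree (pCons 0 x) \<le> N"
    using dx Suc.prems p by (simp add: x_def)
  ultimately show ?case unfolding e using Bf_CS[OF h psd _ _ Suc.prems(2)] by blast
qed

lemma Bf_null_mult: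
  assumes h: "herm c" and psd: "\<forall>w. degree w \<le> N \<longrightarrow> 0 \<le> Re (Bf c N w w)"
    and p: "p \<noteq> 0" "degree p \<le> N" "Bf c N p p = 0"
    and u: "degree u + degree p \<le> N" and w: "degree w \<le> N"
  shows "Bf c N (p * u) w = 0"
proof -
  have "p * u = (\<Sum>m\<le>degree u. smult (coeff u m) (monom 1 m * p))"
    apply (subst (1) poly_as_sum_of_monoms[symmetric, of u])
    by (simp add: sum_distrib_left mult.commute)
       (intro sum.cong refl, metis mult_smult_right smult_monom mult.right_neutral mult.commute)
  hence "Bf c N (p * u) w = (\<Sum>m\<le>degree u. cnj (coeff u m) * Bf c N (monom 1 m * p) w)"
    by (simp add: Bf_sum_left Bf_smult_left)
  also have "\<dots> = 0"
    using Bf_null_shift[OF h psd p] u w by (intro sum.neutral) auto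
  finally show ?thesis .
qed


lemma lin_factor:
  assumes "poly p (\<alpha>::complex) = 0"
  shows "p = [:-\<alpha>, 1:] * (p div [:-\<alpha>, 1:])"
    "pCons 0 (p div [:-\<alpha>, 1:]) = p + smult \<alpha> (p div [:-\<alpha>, 1:])"
proof -
  have "[:-\<alpha>, 1:] dvd p" using assms by (simp add: dvd_iff_poly_eq_0)
  thus e: "p = [:-\<alpha>, 1:] * (p div [:-\<alpha>, 1:])" by (metis dvd_mult_div_cancel)
  show "pCons 0 (p div [:-\<alpha>, 1:]) = p + smult \<alpha> (p div [:-\<alpha>, 1:])"
    by (subst (2) e) (simp add: algebra_simps)
qed

lemma cara:
  assumes h: "herm c" and psd: "\<forall>w. degree w \<le> N \<longrightarrow> 0 \<le> Re (Bf c N w w)"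
    and c0: "c 0 \<noteq> 0"
    and sing: "p0 \<noteq> 0" "degree p0 \<le> N" "Bf c N p0 p0 = 0"
  shows "\<exists>S \<rho>. finite S \<and> S \<noteq> {} \<and> card S \<le> N \<and> (\<forall>\<beta>\<in>S. cmod \<beta> = 1 \<and> \<rho> \<beta> > (0::real)) \<and>
           (\<forall>k\<le>N. c (int k) = (\<Sum>\<beta>\<in>S. of_real (\<rho> \<beta>) * \<beta> ^ k))"
proof -
  define P where "P q \<longleftrightarrow> q \<noteq> 0 \<and> degree q \<le> N \<and> Bf c N q q = 0" for q
  obtain p where pP: "P p" and pmin: "\<And>q. P q \<Longrightarrow> degree p \<le> degree q"
    using ex_has_least_nat[of P p0 degree] sing unfolding P_def by blast
  have p0: "p \<noteq> 0" and pN: "degree p \<le> N" and pp: "Bf c N p p = 0" using pP by (auto simp: P_def)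
  define s where "s = degree p"
  have pos: "Re (Bf c N q q) > 0" if "q \<noteq> 0" "degree q < s" for q
  proof -
    have "Bf c N q q \<noteq> 0" using pmin[of q] that pN unfolding P_def s_def by auto
    moreover have "Im (Bf c N q q) = 0" using Bf_real[OF h] .
    moreover have "Re (Bf c N q q) \<ge> 0" using psd that pN s_def by auto
    ultimately show ?thesis by (simp add: complex_eq_iff less_le)
  qed
  have s1: "s \<ge> 1"
  proof (rule ccontr)
    assume "\<not> s \<ge> 1"
    hence "degree p = 0" by (simp add: s_def)
    then obtain a where a: "p = monom a 0" by (metis degree_eq_zeroE monom_0)
    have "a \<noteq> 0" using a p0 by simp
    hence "Bf c N p p \<noteq> 0" using c0 a by (simp add: Bf_monom)
    thus False using pp by simp
  qed
  have null: "Bf c N p w = 0" "Bf c N w p = 0" if "degree w \<le> N" for w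
  proof -
    show "Bf c N p w = 0" using Bf_CS[OF h psd pN pp that] .
    thus "Bf c N w p = 0" using Bf_cnj[OF h, of N p w] by simp
  qed
  have E: "Bf c N a b = cnj \<alpha> * \<beta> * Bf c N a b"
    if "degree a < s" "degree b < s" "pCons 0 a = p + smult \<alpha> a" "pCons 0 b = p + smult \<beta> b"
    for a b \<alpha> \<beta>
  proof -
    have da: "degree a \<le> N" "degree b \<le> N" using that pN s_def by auto
    have "Bf c N a b = Bf c N (pCons 0 a) (pCons 0 b)"
      using Bf_shift[of a N b c] that pN s_def by simp
    also have "\<dots> = Bf c N p p + \<beta> * Bf c N p b + cnj \<alpha> * Bf c N a p + cnj \<alpha> * \<beta> * Bf c N a b"
      unfolding that(3,4) by (simp add: Bf_add_left Bf_add_right Bf_smult_left Bf_smult_right algebra_simps)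
    also have "\<dots> = cnj \<alpha> * \<beta> * Bf c N a b" using null da pp by simp
    finally show ?thesis .
  qed
  define ll where "ll \<alpha> = p div [:-\<alpha>, 1:]" for \<alpha>
  define S where "S = {x. poly p x = 0}"
  have lf: "p = [:-\<alpha>, 1:] * ll \<alpha>" "pCons 0 (ll \<alpha>) = p + smult \<alpha> (ll \<alpha>)" if "\<alpha> \<in> S" for \<alpha>
    using lin_factor[of p \<alpha>] that by (auto simp: ll_def S_def)
  have l0: "ll \<alpha> \<noteq> 0" if "\<alpha> \<in> S" for \<alpha> using lf(1)[OF that] p0 by auto
  have dl: "degree (ll \<alpha>) = s - 1" "degree (ll \<alpha>) < s" if "\<alpha> \<in> S" for \<alpha>
  proof -
    have "degree p = degree [:-\<alpha>, 1:] + degree (ll \<alpha>)"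
      by (subst lf(1)[OF that], rule degree_mult_eq) (use l0[OF that] in auto)
    hence "s = 1 + degree (ll \<alpha>)" unfolding s_def by simp
    thus "degree (ll \<alpha>) = s - 1" "degree (ll \<alpha>) < s" by auto
  qed
  have lpos: "Re (Bf c N (ll \<alpha>) (ll \<alpha>)) > 0" if "\<alpha> \<in> S" for \<alpha>
    using pos[OF l0[OF that] dl(2)[OF that]] .
  have unit: "cnj \<alpha> * \<alpha> = 1" if "\<alpha> \<in> S" for \<alpha>
  proof -
    have "Bf c N (ll \<alpha>) (ll \<alpha>) = cnj \<alpha> * \<alpha> * Bf c N (ll \<alpha>) (ll \<alpha>)"
      using E[OF dl(2)[OF that] dl(2)[OF that] lf(2)[OF that] lf(2)[OF that]] .
    moreover have "Bf c N (ll \<alpha>) (ll \<alpha>) \<noteq> 0" using lpos[OF that] by auto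
    ultimately show ?thesis by simp
  qed
  have cm1: "cmod \<alpha> = 1" if "\<alpha> \<in> S" for \<alpha>
  proof -
    have "of_real (cmod \<alpha> ^ 2) = (1::complex)" using unit[OF that] complex_norm_square[of \<alpha>]
      by (simp add: mult.commute)
    hence "cmod \<alpha> ^ 2 = 1" by (metis of_real_eq_1_iff)
    thus ?thesis using norm_ge_zero[of \<alpha>] by (auto simp add: power2_eq_1_iff)
  qed
  have simple: "poly (ll \<alpha>) \<alpha> \<noteq> 0" if "\<alpha> \<in> S" for \<alpha>
  proof
    assume r: "poly (ll \<alpha>) \<alpha> = 0"
    define hh where "hh = ll \<alpha> div [:-\<alpha>, 1:]"
    have hf: "ll \<alpha> = [:-\<alpha>, 1:] * hh" "pCons 0 hh = ll \<alpha> + smult \<alpha> hh"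
      using lin_factor[OF r] by (auto simp: hh_def)
    have h0: "hh \<noteq> 0" using hf(1) l0[OF that] by auto
    have "degree (ll \<alpha>) = degree [:-\<alpha>, 1:] + degree hh"
      by (subst hf(1), rule degree_mult_eq) (use h0 in auto)
    hence dh: "degree hh + 1 = degree (ll \<alpha>)" by simp
    have dhN: "degree hh < N" "degree (pCons 0 hh) \<le> N" using dh dl[OF that] pN s_def by auto
    have dlN: "degree (ll \<alpha>) < N" using dl[OF that] pN s_def by auto
    have "Bf c N hh (ll \<alpha>) = Bf c N (pCons 0 hh) (pCons 0 (ll \<alpha>))"
      using Bf_shift[of hh N "ll \<alpha>" c] dhN dlN by simp
    also have "\<dots> = \<alpha> * Bf c N (pCons 0 hh) (ll \<alpha>)"
      unfolding lf(2)[OF that] using null(2)[OF dhN(2)] by (simp add: Bf_add_right Bf_smult_right)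
    also have "\<dots> = \<alpha> * Bf c N (ll \<alpha>) (ll \<alpha>) + (\<alpha> * cnj \<alpha>) * Bf c N hh (ll \<alpha>)"
      unfolding hf(2) by (simp add: Bf_add_left Bf_smult_left algebra_simps)
    also have "\<alpha> * cnj \<alpha> = 1" using unit[OF that] by (simp add: mult.commute)
    finally have "\<alpha> * Bf c N (ll \<alpha>) (ll \<alpha>) = 0" by simp
    moreover have "\<alpha> \<noteq> 0" using cm1[OF that] by auto
    moreover have "Bf c N (ll \<alpha>) (ll \<alpha>) \<noteq> 0" using lpos[OF that] by auto
    ultimately show False by simp
  qed
  have orth: "Bf c N (ll \<alpha>) (ll \<beta>) = 0" if "\<alpha> \<in> S" "\<beta> \<in> S" "\<alpha> \<noteq> \<beta>" for \<alpha> \<beta>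
  proof (rule ccontr)
    assume "Bf c N (ll \<alpha>) (ll \<beta>) \<noteq> 0"
    hence "cnj \<alpha> * \<beta> = 1"
      using E[OF dl(2)[OF that(1)] dl(2)[OF that(2)] lf(2)[OF that(1)] lf(2)[OF that(2)]] by simp
    hence "\<alpha> * (cnj \<alpha> * \<beta>) = \<alpha>" by simp
    moreover have "\<alpha> * (cnj \<alpha> * \<beta>) = (cnj \<alpha> * \<alpha>) * \<beta>" by (simp only: mult_ac)
    ultimately have "\<beta> = \<alpha>" using unit[OF that(1)] by simp
    thus False using that by simp
  qed
  have fin: "finite S" unfolding S_def using poly_roots_finite[OF p0] .
  have ord1: "order z p = 1" if "z \<in> S" for z
  proof -
    have "order z p \<noteq> 0" using that p0 order_root[of p z] by (auto simp: S_def)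
    moreover have "\<not> 2 \<le> order z p"
    proof
      assume "2 \<le> order z p"
      hence "[:-z, 1:] ^ 2 dvd p" using order_divides by blast
      then obtain g where g: "p = [:-z, 1:] ^ 2 * g" by (elim dvdE)
      have "ll z = [:-z, 1:] * g" unfolding ll_def g power2_eq_square mult.assoc
        by (rule nonzero_mult_div_cancel_left) simp
      hence "poly (ll z) z = 0" by simp
      thus False using simple[OF that] by simp
    qed
    ultimately show ?thesis by simp
  qed
  have "p = smult (lead_coeff p) (\<Prod>z\<in>S. [:-z, 1:] ^ order z p)"
    using complex_poly_decompose[of p] by (simp add: S_def)
  also have "(\<Prod>z\<in>S. [:-z, 1:] ^ order z p) = (\<Prod>z\<in>S. [:-z, 1:])"
    using ord1 by (intro prod.cong) auto
  finally have "degree p = degree (smult (lead_coeff p) (\<Prod>z\<in>S. [:-z, 1:]))"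
    by (rule arg_cong[where f=degree])
  also have "\<dots> = degree (\<Prod>z\<in>S. [:-z, 1:])" using p0 by simp
  also have "\<dots> = card S" by (subst degree_prod_sum_eq) auto
  finally have cardS: "card S = s" by (simp add: s_def)
  have llv: "poly (ll \<beta>) \<gamma> = 0" if "\<beta> \<in> S" "\<gamma> \<in> S" "\<beta> \<noteq> \<gamma>" for \<beta> \<gamma>
  proof -
    have "poly p \<gamma> = (\<gamma> - \<beta>) * poly (ll \<beta>) \<gamma>" by (subst lf(1)[OF that(1)]) (simp add: algebra_simps)
    moreover have "poly p \<gamma> = 0" using that(2) by (simp add: S_def)
    ultimately show ?thesis using that(3) by simp
  qed
  have lagr: "f = (\<Sum>\<beta>\<in>S. smult (poly f \<beta> / poly (ll \<beta>) \<beta>) (ll \<beta>))" if df: "degree f < s" for f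
  proof (rule ccontr)
    define g where "g = f - (\<Sum>\<beta>\<in>S. smult (poly f \<beta> / poly (ll \<beta>) \<beta>) (ll \<beta>))"
    assume "f \<noteq> (\<Sum>\<beta>\<in>S. smult (poly f \<beta> / poly (ll \<beta>) \<beta>) (ll \<beta>))"
    hence g0: "g \<noteq> 0" by (simp add: g_def)
    have "degree (\<Sum>\<beta>\<in>S. smult (poly f \<beta> / poly (ll \<beta>) \<beta>) (ll \<beta>)) \<le> s - 1"
      using fin by (rule degree_sum_le) (metis degree_smult_le dl(1) order.trans)
    moreover have "degree f \<le> s - 1" using df by simp
    ultimately have "degree g \<le> s - 1" unfolding g_def by (intro degree_diff_le)
    hence dg: "degree g < s" using s1 by simp
    have "S \<subseteq> {x. poly g x = 0}"
    proof
      fix \<gamma> assume \<gamma>: "\<gamma> \<in> S"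
      have "(\<Sum>\<beta>\<in>S. poly f \<beta> / poly (ll \<beta>) \<beta> * poly (ll \<beta>) \<gamma>) =
            (\<Sum>\<beta>\<in>S. if \<beta> = \<gamma> then poly f \<gamma> else 0)"
        using simple[OF \<gamma>] llv \<gamma> by (intro sum.cong refl) auto
      also have "\<dots> = poly f \<gamma>" using \<gamma> fin by (simp add: sum.delta')
      finally show "\<gamma> \<in> {x. poly g x = 0}" by (simp add: g_def poly_sum)
    qed
    hence "card S \<le> card {x. poly g x = 0}" using poly_roots_finite[OF g0] by (rule card_mono[rotated])
    also have "\<dots> \<le> degree g" by (rule card_poly_roots_bound[OF g0])
    finally show False using dg cardS by simp
  qed
  define \<rho> where "\<rho> \<beta> = Re (Bf c N (ll \<beta>) (ll \<beta>)) / (cmod (poly (ll \<beta>) \<beta>))^2" for \<beta>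
  have rpos: "\<rho> \<beta> > 0" if "\<beta> \<in> S" for \<beta>
    using lpos[OF that] simple[OF that] by (simp add: \<rho>_def)
  have key: "cnj (1 / poly (ll \<beta>) \<beta>) * (y / poly (ll \<beta>) \<beta>) * Bf c N (ll \<beta>) (ll \<beta>)
      = of_real (\<rho> \<beta>) * y" if "\<beta> \<in> S" for \<beta> y
  proof -
    define x where "x = poly (ll \<beta>) \<beta>"
    have x0: "x \<noteq> 0" using simple[OF that] by (simp add: x_def)
    have B: "Bf c N (ll \<beta>) (ll \<beta>) = of_real (Re (Bf c N (ll \<beta>) (ll \<beta>)))"
      using Bf_real[OF h] by (simp add: complex_eq_iff)
    have nx: "of_real ((cmod x)^2) = x * cnj x" by (rule complex_norm_square)
    have "cnj x \<noteq> 0" using x0 by simp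
    have nx2: "(complex_of_real (cmod x))^2 = x * cnj x" using nx by simp
    show ?thesis unfolding \<rho>_def x_def[symmetric]
      by (subst B, simp add: nx nx2 field_simps x0 \<open>cnj x \<noteq> 0\<close>)
  qed
  have final: "c (int k) = (\<Sum>\<beta>\<in>S. of_real (\<rho> \<beta>) * \<beta> ^ k)" if kN: "k \<le> N" for k
  proof -
    define r where "r = monom 1 k mod p"
    define u where "u = monom 1 k div p"
    have mk: "monom 1 k = p * u + r" unfolding r_def u_def by (simp add: mult.commute)
    have dr: "degree r < s" using degree_mod_less[OF p0, of "monom 1 k"] s1 by (auto simp: r_def s_def)
    have du: "degree u + s \<le> N"
    proof (cases "u = 0")
      case True thus ?thesis using pN by (simp add: s_def)
    next
      case False
      have "degree (p * u) = s + degree u" using False p0 by (simp add: degree_mult_eq s_def)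
      moreover have "p * u = monom 1 k - r" using mk by simp
      moreover have "degree (monom 1 k - r) \<le> N"
        using kN dr pN s_def by (intro degree_diff_le) (auto simp: degree_monom_le intro: order.trans[OF degree_monom_le])
      ultimately show ?thesis by simp
    qed
    have one: "(1::complex poly) = monom 1 0" by (simp add: monom_0 one_pCons)
    have "Bf c N (monom 1 0) (monom 1 k) = c (int k)" using kN by (simp only: Bf_monom) simp
    hence "c (int k) = Bf c N 1 (monom 1 k)" by (simp only: one)
    also have "\<dots> = Bf c N 1 (p * u) + Bf c N 1 r" unfolding mk by (simp add: Bf_add_right)
    also have "Bf c N 1 (p * u) = 0"
    proof -
      have "Bf c N (p * u) 1 = 0"
        using Bf_null_mult[OF h psd p0 pN pp] du by (simp add: s_def)
      thus ?thesis using Bf_cnj[OF h, of N "p * u" 1] by simp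
    qed
    also have rv: "poly r \<beta> = \<beta> ^ k" if "\<beta> \<in> S" for \<beta>
    proof -
      have "poly (monom 1 k) \<beta> = poly p \<beta> * poly u \<beta> + poly r \<beta>" unfolding mk by simp
      thus ?thesis using that by (simp add: S_def poly_monom)
    qed
    have "Bf c N 1 r = Bf c N (\<Sum>\<gamma>\<in>S. smult (poly 1 \<gamma> / poly (ll \<gamma>) \<gamma>) (ll \<gamma>))
                       (\<Sum>\<beta>\<in>S. smult (poly r \<beta> / poly (ll \<beta>) \<beta>) (ll \<beta>))"
      using lagr[of 1] lagr[OF dr] s1 by simp
    also have "\<dots> = (\<Sum>\<gamma>\<in>S. \<Sum>\<beta>\<in>S. cnj (1 / poly (ll \<gamma>) \<gamma>) * (poly r \<beta> / poly (ll \<beta>) \<beta>)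
                     * Bf c N (ll \<gamma>) (ll \<beta>))"
      apply (simp only: Bf_sum_left Bf_sum_right Bf_smult_left Bf_smult_right sum_distrib_left mult.assoc poly_1)
      apply (subst sum.swap)
      by (simp add: mult_ac)
    also have "\<dots> = (\<Sum>\<gamma>\<in>S. \<Sum>\<beta>\<in>S. if \<beta> = \<gamma> then of_real (\<rho> \<gamma>) * \<gamma> ^ k else 0)"
      using orth key rv by (intro sum.cong refl) auto
    also have "\<dots> = (\<Sum>\<beta>\<in>S. of_real (\<rho> \<beta>) * \<beta> ^ k)"
      using fin by (simp add: sum.delta')
    finally show ?thesis by simp
  qed
  show ?thesis
    using fin cardS s1 pN cm1 rpos final unfolding s_def
    by (intro exI[of _ S] exI[of _ \<rho>]) auto
qed


definition sd :: "nat \<Rightarrow> nat \<Rightarrow> nat" where "sd i j = (if i \<le> j then j - i else i - j)"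

lemma sd_simps [simp]: "sd (Suc i) (Suc j) = sd i j" "sd 0 j = j" "sd i 0 = i"
  by (auto simp: sd_def)

definition KM :: "real \<Rightarrow> nat \<Rightarrow> (nat \<Rightarrow> complex) \<Rightarrow> complex" where
  "KM s n e = (\<Sum>i\<le>n. \<Sum>j\<le>n. cnj (e i) * e j * of_real (s ^ sd i j))"

definition y0 :: "real \<Rightarrow> nat \<Rightarrow> (nat \<Rightarrow> complex) \<Rightarrow> complex" where
  "y0 s n e = (\<Sum>j\<le>n. e j * of_real (s ^ j))"

lemma KM_Suc:
  "KM s (Suc n) e = cnj (e 0) * e 0 + cnj (e 0) * of_real s * y0 s n (\<lambda>j. e (Suc j))
     + e 0 * of_real s * cnj (y0 s n (\<lambda>j. e (Suc j))) + KM s n (\<lambda>j. e (Suc j))"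
  unfolding KM_def y0_def
  by (simp del: sum.atMost_Suc add: sum.atMost_Suc_shift sum.distrib sum_distrib_left cnj_sum
       algebra_simps)

lemma y0_Suc: "y0 s (Suc n) e = e 0 + of_real s * y0 s n (\<lambda>j. e (Suc j))"
  unfolding y0_def by (simp del: sum.atMost_Suc add: sum.atMost_Suc_shift sum_distrib_left algebra_simps)

lemma KM_main:
  assumes s: "0 \<le> s" "s < 1"
  shows "Im (KM s n e - cnj (y0 s n e) * y0 s n e) = 0 \<and> Re (KM s n e - cnj (y0 s n e) * y0 s n e) \<ge> 0
     \<and> (KM s n e = 0 \<longrightarrow> (\<forall>j\<le>n. e j = 0))"
proof (induction n arbitrary: e)
  case 0
  show ?case by (simp add: KM_def y0_def)
next
  case (Suc n)
  define e' where "e' = (\<lambda>j. e (Suc j))"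
  define y where "y = y0 s n e'"
  note IH = Suc.IH[of e', folded y_def]
  have R: "KM s (Suc n) e - cnj (y0 s (Suc n) e) * y0 s (Suc n) e
      = of_real (1 - s^2) * (cnj y * y) + (KM s n e' - cnj y * y)"
    unfolding KM_Suc y0_Suc e'_def[symmetric] y_def[symmetric]
    by (simp add: algebra_simps power2_eq_square)
  have yy: "cnj y * y = of_real (cmod y ^ 2)" using complex_norm_square[of y] by (simp add: mult.commute)
  have s2: "1 - s^2 > 0" using s by (simp add: power_less_one_iff abs_square_less_1)
  have p1: "Im (KM s (Suc n) e - cnj (y0 s (Suc n) e) * y0 s (Suc n) e) = 0"
    using IH unfolding R yy by simp
  have p2: "Re (KM s (Suc n) e - cnj (y0 s (Suc n) e) * y0 s (Suc n) e) \<ge> 0"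
    using IH s2 unfolding R yy by simp
  have p3: "\<forall>j\<le>Suc n. e j = 0" if K0: "KM s (Suc n) e = 0"
  proof -
    define Y where "Y = y0 s (Suc n) e"
    have YY: "cnj Y * Y = of_real (cmod Y ^ 2)" using complex_norm_square[of Y] by (simp add: mult.commute)
    have "Re (cnj Y * Y) + Re (KM s (Suc n) e - cnj Y * Y) = 0" using K0 by simp
    moreover have "Re (KM s (Suc n) e - cnj Y * Y) \<ge> 0" using p2 by (simp add: Y_def)
    moreover have "Re (cnj Y * Y) \<ge> 0" unfolding YY by simp
    ultimately have A: "Re (cnj Y * Y) = 0" "Re (KM s (Suc n) e - cnj Y * Y) = 0" by linarith+
    hence "Y = 0" unfolding YY by simp
    have B: "(1 - s^2) * cmod y ^ 2 + Re (KM s n e' - cnj y * y) = 0"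
      using A(2) unfolding Y_def R yy by simp
    have "Re (KM s n e' - cnj y * y) \<ge> 0" using IH by simp
    moreover have "(1 - s^2) * cmod y ^ 2 \<ge> 0" using s2 by simp
    ultimately have C: "(1 - s^2) * cmod y ^ 2 = 0" "Re (KM s n e' - cnj y * y) = 0" using B by linarith+
    hence y0': "y = 0" using s2 by simp
    have "KM s n e' - cnj y * y = 0" using C(2) IH by (simp add: complex_eq_iff)
    hence "KM s n e' = 0" using y0' by simp
    hence e'0: "\<forall>j\<le>n. e (Suc j) = 0" using IH by (simp add: e'_def)
    have "e 0 = 0" using \<open>Y = 0\<close> y0' unfolding Y_def y0_Suc e'_def[symmetric] y_def[symmetric] by simp
    show ?thesis
    proof (intro allI impI)
      fix j assume "j \<le> Suc n"
      then show "e j = 0" using e'0 \<open>e 0 = 0\<close> by (cases j) auto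
    qed
  qed
  show ?case using p1 p2 p3 by blast
qed

lemma KM_pos:
  assumes s: "0 \<le> s" "s < 1" and e: "j \<le> n" "e j \<noteq> 0"
  shows "Re (KM s n e) > 0" "Im (KM s n e) = 0"
proof -
  define Y where "Y = y0 s n e"
  have YY: "cnj Y * Y = of_real (cmod Y ^ 2)" using complex_norm_square[of Y] by (simp add: mult.commute)
  note M = KM_main[OF s, of n e, folded Y_def]
  show I: "Im (KM s n e) = 0" using M unfolding YY by simp
  have "(cmod Y)^2 \<le> Re (KM s n e)" using M unfolding YY by simp
  hence "Re (KM s n e) \<ge> 0" by (metis order.trans zero_le_power2)
  moreover have "KM s n e \<noteq> 0" using M e by blast
  ultimately show "Re (KM s n e) > 0" using I by (simp add: complex_eq_iff less_le)
qed

lemma KM_one: "KM 1 n e = cnj (\<Sum>j\<le>n. e j) * (\<Sum>j\<le>n. e j)"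
  unfolding KM_def by (simp add: cnj_sum sum_distrib_left sum_distrib_right mult.commute)


lemma unit_pow:
  assumes "cmod w = 1"
  shows "cnj (w ^ i) * w ^ j = (if i \<le> j then w ^ (j - i) else cnj w ^ (i - j))"
proof -
  have u: "cnj w * w = 1" using complex_norm_square[of w] assms by (simp add: mult.commute)
  show ?thesis
  proof (cases "i \<le> j")
    case True
    hence "w ^ j = w ^ i * w ^ (j - i)" by (simp add: power_add[symmetric])
    hence "cnj (w ^ i) * w ^ j = (cnj w * w) ^ i * w ^ (j - i)"
      by (simp add: power_mult_distrib mult.assoc)
    thus ?thesis using True u by simp
  next
    case False
    hence "cnj w ^ i = cnj w ^ j * cnj w ^ (i - j)" by (simp add: power_add[symmetric])
    hence "cnj (w ^ i) * w ^ j = (cnj w * w) ^ j * cnj w ^ (i - j)"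
      by (simp add: power_mult_distrib mult_ac)
    thus ?thesis using False u by simp
  qed
qed

lemma QF_atomic:
  assumes u: "\<forall>\<alpha>\<in>{1..n}. cmod (\<omega> \<alpha>) = 1"
    and c: "\<forall>k. \<bar>k\<bar> \<le> int N \<longrightarrow> c k = of_real (s ^ nat \<bar>k\<bar>) *
        (\<Sum>\<alpha>=1..n. of_real (\<rho> \<alpha>) * (if 0 \<le> k then \<omega> \<alpha> ^ nat k else cnj (\<omega> \<alpha>) ^ nat (- k)))"
  shows "QF c N d d = (\<Sum>\<alpha>=1..n. of_real (\<rho> \<alpha>) * KM s N (\<lambda>j. d j * \<omega> \<alpha> ^ j))"
proof -
  have cij: "c (int j - int i) = (\<Sum>\<alpha>=1..n. of_real (\<rho> \<alpha>) * (cnj (\<omega> \<alpha> ^ i) * \<omega> \<alpha> ^ j)) * of_real (s ^ sd i j)"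
    if "i \<le> N" "j \<le> N" for i j
  proof -
    have k: "\<bar>int j - int i\<bar> \<le> int N" using that by auto
    have n: "nat \<bar>int j - int i\<bar> = sd i j" by (auto simp: sd_def)
    have "(\<Sum>\<alpha>=1..n. of_real (\<rho> \<alpha>) * (if 0 \<le> int j - int i then \<omega> \<alpha> ^ nat (int j - int i) else cnj (\<omega> \<alpha>) ^ nat (- (int j - int i))))
        = (\<Sum>\<alpha>=1..n. of_real (\<rho> \<alpha>) * (cnj (\<omega> \<alpha> ^ i) * \<omega> \<alpha> ^ j))"
      using u unit_pow by (intro sum.cong refl) (auto simp: nat_diff_distrib')
    thus ?thesis using c[rule_format, OF k] n by (simp add: mult.commute)
  qed
  have "QF c N d d = (\<Sum>i\<le>N. \<Sum>j\<le>N. \<Sum>\<alpha>=1..n. of_real (\<rho> \<alpha>) *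
          (cnj (d i * \<omega> \<alpha> ^ i) * (d j * \<omega> \<alpha> ^ j) * of_real (s ^ sd i j)))"
    unfolding QF_def by (intro sum.cong refl) (simp add: cij sum_distrib_left sum_distrib_right mult_ac)
  also have "\<dots> = (\<Sum>i\<le>N. \<Sum>\<alpha>=1..n. \<Sum>j\<le>N. of_real (\<rho> \<alpha>) *
          (cnj (d i * \<omega> \<alpha> ^ i) * (d j * \<omega> \<alpha> ^ j) * of_real (s ^ sd i j)))"
    by (intro sum.cong refl) (rule sum.swap)
  also have "\<dots> = (\<Sum>\<alpha>=1..n. \<Sum>i\<le>N. \<Sum>j\<le>N. of_real (\<rho> \<alpha>) *
          (cnj (d i * \<omega> \<alpha> ^ i) * (d j * \<omega> \<alpha> ^ j) * of_real (s ^ sd i j)))"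
    by (rule sum.swap)
  also have "\<dots> = (\<Sum>\<alpha>=1..n. of_real (\<rho> \<alpha>) * KM s N (\<lambda>j. d j * \<omega> \<alpha> ^ j))"
    unfolding KM_def by (simp add: sum_distrib_left)
  finally show ?thesis .
qed

lemma poly_sumN:
  fixes p :: "complex poly"
  assumes "degree p \<le> N" shows "poly p x = (\<Sum>i\<le>N. coeff p i * x ^ i)"
proof -
  have "poly p x = (\<Sum>i\<le>degree p. coeff p i * x ^ i)" by (rule poly_altdef)
  also have "\<dots> = (\<Sum>i\<le>N. coeff p i * x ^ i)"
    using assms by (intro sum.mono_neutral_left) (auto simp: coeff_eq_0)
  finally show ?thesis .
qed

lemma KM_one_poly: "degree (p::complex poly) \<le> N \<Longrightarrow> KM 1 N (\<lambda>j. coeff p j * x ^ j) = cnj (poly p x) * poly p x"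
  by (simp add: KM_one poly_sumN)


definition cM :: "complex measure \<Rightarrow> real \<Rightarrow> int \<Rightarrow> complex" where
  "cM \<nu> r k = (if 0 \<le> k then circle_moment \<nu> (nat k) else cnj (circle_moment \<nu> (nat (-k)))) / of_real (r ^ nat \<bar>k\<bar>)"

lemma space_nu:
  assumes "sets \<nu> = sets (restrict_space borel (sphere (0::complex) 1))"
  shows "space \<nu> = sphere 0 1"
  using sets_eq_imp_space_eq[OF assms] by (simp add: space_restrict_space)

lemma integrable_nu:
  assumes sets: "sets \<nu> = sets (restrict_space borel (sphere (0::complex) 1))"
    and fin: "finite_measure \<nu>"
    and cont: "continuous_on UNIV f" and bnd: "\<And>z. cmod z = 1 \<Longrightarrow> cmod (f z) \<le> B"
  shows "integrable \<nu> (f :: complex \<Rightarrow> complex)"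
proof -
  have "f \<in> borel_measurable (restrict_space borel (sphere 0 1))"
    by (rule measurable_restrict_space1[OF borel_measurable_continuous_onI[OF cont]])
  hence m: "f \<in> borel_measurable \<nu>" by (simp add: measurable_cong_sets[OF sets refl])
  have "AE z in \<nu>. cmod (f z) \<le> B"
    using space_nu[OF sets] bnd by (intro AE_I2) auto
  thus ?thesis using finite_measure.integrable_const_bound[OF fin] m by blast
qed

lemma integrable_nu_pow:
  assumes sets: "sets \<nu> = sets (restrict_space borel (sphere (0::complex) 1))"
    and fin: "finite_measure \<nu>"
  shows "integrable \<nu> (\<lambda>z. cnj (z ^ i) * z ^ j)" "integrable \<nu> (\<lambda>z. z ^ j)"
  by (rule integrable_nu[OF sets fin, where B=1]; (intro continuous_intros)?; simp add: norm_mult norm_power)+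

lemma cM_1:
  assumes sets: "sets \<nu> = sets (restrict_space borel (sphere (0::complex) 1))"
    and fin: "finite_measure \<nu>"
  shows "cM \<nu> 1 (int j - int i) = integral\<^sup>L \<nu> (\<lambda>z. cnj (z ^ i) * z ^ j)"
proof (cases "i \<le> j")
  case True
  have "cM \<nu> 1 (int j - int i) = integral\<^sup>L \<nu> (\<lambda>z. z ^ (j - i))"
    using True by (simp add: cM_def circle_moment_def nat_diff_distrib')
  also have "\<dots> = integral\<^sup>L \<nu> (\<lambda>z. cnj (z ^ i) * z ^ j)"
    using True unit_pow space_nu[OF sets] by (intro Bochner_Integration.integral_cong refl) auto
  finally show ?thesis .
next
  case False
  have "cM \<nu> 1 (int j - int i) = cnj (integral\<^sup>L \<nu> (\<lambda>z. z ^ (i - j)))"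
    using False by (simp add: cM_def circle_moment_def nat_diff_distrib')
  also have "\<dots> = integral\<^sup>L \<nu> (\<lambda>z. cnj z ^ (i - j))"
    by (simp flip: Bochner_Integration.integral_cnj)
  also have "\<dots> = integral\<^sup>L \<nu> (\<lambda>z. cnj (z ^ i) * z ^ j)"
    using False unit_pow space_nu[OF sets] by (intro Bochner_Integration.integral_cong refl) auto
  finally show ?thesis .
qed

lemma QF_nu:
  assumes sets: "sets \<nu> = sets (restrict_space borel (sphere (0::complex) 1))"
    and fin: "finite_measure \<nu>"
  shows "QF (cM \<nu> 1) N d d = of_real (integral\<^sup>L \<nu> (\<lambda>z. (cmod (\<Sum>j\<le>N. d j * z ^ j))^2))"
proof -
  note I = integrable_nu_pow[OF sets fin]
  have "QF (cM \<nu> 1) N d d = (\<Sum>i\<le>N. \<Sum>j\<le>N. integral\<^sup>L \<nu> (\<lambda>z. cnj (d i) * d j * (cnj (z ^ i) * z ^ j)))"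
    unfolding QF_def cM_1[OF sets fin] using I by (simp add: mult.assoc)
  also have "\<dots> = (\<Sum>i\<le>N. integral\<^sup>L \<nu> (\<lambda>z. \<Sum>j\<le>N. cnj (d i) * d j * (cnj (z ^ i) * z ^ j)))"
    using I by (subst Bochner_Integration.integral_sum) (auto simp: mult.assoc)
  also have "\<dots> = integral\<^sup>L \<nu> (\<lambda>z. \<Sum>i\<le>N. \<Sum>j\<le>N. cnj (d i) * d j * (cnj (z ^ i) * z ^ j))"
    using I by (subst Bochner_Integration.integral_sum) (auto simp: mult.assoc)
  also have "\<dots> = integral\<^sup>L \<nu> (\<lambda>z. of_real ((cmod (\<Sum>j\<le>N. d j * z ^ j))^2))"
  proof (intro Bochner_Integration.integral_cong refl)
    fix z
    have "(\<Sum>i\<le>N. \<Sum>j\<le>N. cnj (d i) * d j * (cnj (z ^ i) * z ^ j)) =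
          cnj (\<Sum>j\<le>N. d j * z ^ j) * (\<Sum>j\<le>N. d j * z ^ j)"
      by (simp add: cnj_sum sum_distrib_left sum_distrib_right mult_ac)
    also have "\<dots> = of_real ((cmod (\<Sum>j\<le>N. d j * z ^ j))^2)"
      using complex_norm_square[of "\<Sum>j\<le>N. d j * z ^ j"] by (simp only: mult.commute)
    finally show "(\<Sum>i\<le>N. \<Sum>j\<le>N. cnj (d i) * d j * (cnj (z ^ i) * z ^ j)) = of_real ((cmod (\<Sum>j\<le>N. d j * z ^ j))^2)" .
  qed
  also have "\<dots> = of_real (integral\<^sup>L \<nu> (\<lambda>z. (cmod (\<Sum>j\<le>N. d j * z ^ j))^2))"
    by (rule integral_complex_of_real)
  finally show ?thesis .
qed

lemma QF_nu_psd:
  assumes sets: "sets \<nu> = sets (restrict_space borel (sphere (0::complex) 1))"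
    and fin: "finite_measure \<nu>"
  shows "0 \<le> Re (QF (cM \<nu> 1) N d d)"
  unfolding QF_nu[OF sets fin] by simp

lemma moment0:
  "circle_moment \<nu> 0 = of_real (measure \<nu> (space \<nu>))"
  by (simp add: circle_moment_def scaleR_conv_of_real)

lemma herm_cM:
  "herm (cM \<nu> r)"
  unfolding herm_def
proof
  fix k :: int
  show "cM \<nu> r (- k) = cnj (cM \<nu> r k)"
    by (cases "k = 0") (auto simp: cM_def moment0)
qed


lemma QF_cong: "(\<And>j. j \<le> N \<Longrightarrow> d j = e j) \<Longrightarrow> QF c N d d = QF c N e e"
  unfolding QF_def by (intro sum.cong refl) auto

lemma QF_scale: "QF c N (\<lambda>j. a * d j) (\<lambda>j. a * d j) = cnj a * a * QF c N d d"
  unfolding QF_def by (simp add: sum_distrib_left mult_ac)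

lemma QF_zero: "(\<And>j. j \<le> N \<Longrightarrow> d j = 0) \<Longrightarrow> QF c N d d = 0"
  unfolding QF_def by simp

lemma QF_perturb:
  assumes M: "\<And>j. j \<le> N \<Longrightarrow> cmod (d j) \<le> M"
  shows "cmod (QF c N d d - QF c' N d d) \<le> real ((N+1)^2) * M^2 * (\<Sum>k\<in>{-int N..int N}. cmod (c k - c' k))"
proof -
  define D where "D = (\<Sum>k\<in>{-int N..int N}. cmod (c k - c' k))"
  have M0: "0 \<le> M" using M[of 0] by (meson norm_ge_zero order.trans le0)
  have "QF c N d d - QF c' N d d = (\<Sum>i\<le>N. \<Sum>j\<le>N. cnj (d i) * d j * (c (int j - int i) - c' (int j - int i)))"
    unfolding QF_def by (simp add: sum_subtractf algebra_simps)
  also have "cmod \<dots> \<le> (\<Sum>i\<le>N. \<Sum>j\<le>N. cmod (cnj (d i) * d j * (c (int j - int i) - c' (int j - int i))))"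
    by (rule order.trans[OF norm_sum sum_mono[OF norm_sum]])
  also have "\<dots> \<le> (\<Sum>i\<le>N. \<Sum>j\<le>N. M * M * D)"
  proof (intro sum_mono)
    fix i j assume ij: "i \<in> {..N}" "j \<in> {..N}"
    have "cmod (c (int j - int i) - c' (int j - int i)) \<le> D"
      unfolding D_def using ij by (intro member_le_sum) auto
    moreover have "cmod (d i) \<le> M" "cmod (d j) \<le> M" using M ij by auto
    ultimately show "cmod (cnj (d i) * d j * (c (int j - int i) - c' (int j - int i))) \<le> M * M * D"
      unfolding norm_mult complex_mod_cnj
      by (intro mult_mono) (auto intro: mult_mono M0)
  qed
  also have "\<dots> = real ((N+1)^2) * M^2 * D" by (simp add: power2_eq_square algebra_simps)
  finally show ?thesis by (simp add: D_def)
qed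

lemma PD_open:
  fixes c :: "real \<Rightarrow> int \<Rightarrow> complex"
  assumes cont: "\<And>k. isCont (\<lambda>r. c r k) r0"
    and pd: "\<And>d. (\<exists>j\<le>N. d j \<noteq> 0) \<Longrightarrow> Re (QF (c r0) N d d) > 0"
  shows "\<exists>\<eta>>0. \<forall>r. \<bar>r - r0\<bar> < \<eta> \<longrightarrow> (\<forall>d. 0 \<le> Re (QF (c r) N d d))"
proof -
  define S where "S j = (if j \<le> N then cball 0 1 else {0::complex})" for j
  define K where "K = Pi UNIV S \<inter> (\<Union>j\<in>{..N}. (\<lambda>d. d j) -` sphere 0 1)"
  have cP: "compact (Pi UNIV S)"
  proof -
    have "compactin (product_topology (\<lambda>i. euclidean) UNIV) (Pi\<^sub>E UNIV S)"
      by (subst compactin_PiE) (auto simp: S_def)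
    thus ?thesis by (simp add: euclidean_product_topology PiE_UNIV_domain)
  qed
  have coord: "continuous (at x) (\<lambda>d::nat \<Rightarrow> complex. d j)" for x j
    using continuous_on_eq_continuous_at[of UNIV "\<lambda>d::nat \<Rightarrow> complex. d j"] by simp
  have cK: "compact K" unfolding K_def
    by (intro compact_Int_closed cP closed_UN) (auto intro!: continuous_closed_vimage coord)
  define F where "F d = Re (QF (c r0) N d d)" for d
  have cF: "continuous_on K F" unfolding F_def QF_def
    by (intro continuous_intros continuous_on_subset[OF continuous_on_product_coordinates]) auto
  define e0 where "e0 = (\<lambda>j::nat. if j = 0 then 1 else (0::complex))"
  have "e0 \<in> K" unfolding K_def S_def e0_def by auto
  then obtain d0 where d0: "d0 \<in> K" and dmin: "\<And>d. d \<in> K \<Longrightarrow> F d0 \<le> F d"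
    using continuous_attains_inf[OF cK _ cF] by blast
  define lam where "lam = F d0"
  have lam0: "lam > 0"
  proof -
    obtain j where "j \<le> N" "cmod (d0 j) = 1" using d0 unfolding K_def by auto
    hence "d0 j \<noteq> 0" by auto
    thus ?thesis using pd \<open>j \<le> N\<close> by (auto simp: lam_def F_def)
  qed
  have coer: "Re (QF (c r0) N d d) \<ge> lam * M^2"
    if M: "M = Max ((\<lambda>j. cmod (d j)) ` {..N})" for d M
  proof (cases "\<exists>j\<le>N. d j \<noteq> 0")
    case False
    hence "QF (c r0) N d d = 0" by (intro QF_zero) auto
    moreover have "M = 0" using False unfolding M by (auto intro!: Max_eqI)
    ultimately show ?thesis by simp
  next
    case True
    have "M \<in> (\<lambda>j. cmod (d j)) ` {..N}" unfolding M by (intro Max_in) auto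
    then obtain j0 where j0: "j0 \<le> N" "cmod (d j0) = M" by auto
    have Mge: "cmod (d j) \<le> M" if "j \<le> N" for j unfolding M using that by (intro Max_ge) auto
    from True obtain j1 where "j1 \<le> N" "d j1 \<noteq> 0" by auto
    hence Mpos: "M > 0" using Mge[of j1] by (metis norm_le_zero_iff not_le order.trans)
    define d' where "d' j = (if j \<le> N then d j / of_real M else 0)" for j
    have "d' \<in> K"
    proof -
      have "d' \<in> Pi UNIV S"
        using Mge Mpos by (auto simp: d'_def S_def norm_divide divide_le_eq_1)
      moreover have "d' j0 \<in> sphere 0 1" using j0 Mpos by (simp add: d'_def norm_divide)
      ultimately show ?thesis unfolding K_def using j0 by auto
    qed
    hence "lam \<le> F d'" using dmin by (simp add: lam_def)
    also have "F d' = Re (cnj (1 / of_real M) * (1 / of_real M) * QF (c r0) N d d)"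
    proof -
      have "QF (c r0) N d' d' = QF (c r0) N (\<lambda>j. (1 / of_real M) * d j) (\<lambda>j. (1 / of_real M) * d j)"
        by (intro QF_cong) (simp add: d'_def)
      thus ?thesis unfolding F_def QF_scale by simp
    qed
    also have "\<dots> = Re (QF (c r0) N d d) / M^2" by (simp add: power2_eq_square)
    finally show ?thesis using Mpos by (simp add: field_simps)
  qed
  define D where "D r = (\<Sum>k\<in>{-int N..int N}. cmod (c r k - c r0 k))" for r
  have "isCont D r0" unfolding D_def by (intro continuous_intros cont)
  moreover have "D r0 = 0" by (simp add: D_def)
  moreover have eps: "lam / real ((N+1)^2) > 0" using lam0 by simp
  ultimately obtain \<eta> where \<eta>: "\<eta> > 0" "\<And>r. dist r r0 < \<eta> \<Longrightarrow> dist (D r) (D r0) < lam / real ((N+1)^2)"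
    unfolding continuous_at_eps_delta by metis
  show ?thesis
  proof (intro exI[of _ \<eta>] conjI allI impI \<eta>(1))
    fix r d assume r: "\<bar>r - r0\<bar> < \<eta>"
    have Dr: "D r \<le> lam / real ((N+1)^2)" using \<eta>(2)[of r] r \<open>D r0 = 0\<close> by (simp add: dist_real_def)
    have D0: "D r \<ge> 0" unfolding D_def by (intro sum_nonneg) auto
    define M where "M = Max ((\<lambda>j. cmod (d j)) ` {..N})"
    have Mge: "cmod (d j) \<le> M" if "j \<le> N" for j unfolding M_def using that by (intro Max_ge) auto
    have M0: "M \<ge> 0" using Mge[of 0] by (meson norm_ge_zero order.trans le0)
    have P: "cmod (QF (c r) N d d - QF (c r0) N d d) \<le> real ((N+1)^2) * M^2 * D r"
      unfolding D_def by (rule QF_perturb) (use Mge in auto)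
    have "Re (QF (c r0) N d d) - Re (QF (c r) N d d) \<le> real ((N+1)^2) * M^2 * D r"
      using abs_Re_le_cmod[of "QF (c r) N d d - QF (c r0) N d d"] P by simp
    moreover have "real ((N+1)^2) * M^2 * D r \<le> real ((N+1)^2) * M^2 * (lam / real ((N+1)^2))"
      using Dr M0 by (intro mult_left_mono) auto
    moreover have "real ((N+1)^2) * M^2 * (lam / real ((N+1)^2)) = lam * M^2" by simp
    moreover have "Re (QF (c r0) N d d) \<ge> lam * M^2" using coer M_def by blast
    ultimately show "0 \<le> Re (QF (c r) N d d)" by linarith
  qed
qed


lemma angle_rep:
  assumes "cmod z = 1"
  shows "exp (\<i> * complex_of_real (if Arg z = pi then - pi else Arg z)) = z"
    "(if Arg z = pi then - pi else Arg z) \<in> {-pi..<pi}"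
proof -
  have e: "exp (\<i> * complex_of_real (Arg z)) = z" using assms complex_norm_eq_1_exp_eq by blast
  have m: "exp (\<i> * complex_of_real (- pi)) = exp (\<i> * complex_of_real pi)"
    by (simp add: exp_minus)
  show "exp (\<i> * complex_of_real (if Arg z = pi then - pi else Arg z)) = z"
    using e m by (cases "Arg z = pi") auto
  show "(if Arg z = pi then - pi else Arg z) \<in> {-pi..<pi}"
    using mpi_less_Arg[of z] Arg_le_pi[of z] by auto
qed

lemma poly_of_vec:
  fixes d :: "nat \<Rightarrow> complex" and N :: nat
  shows "\<And>j. j \<le> N \<Longrightarrow> coeff (Poly (map d [0..<Suc N])) j = d j" "degree (Poly (map d [0..<Suc N])) \<le> N"
proof -
  define p where "p = Poly (map d [0..<Suc N])"
  show "coeff (Poly (map d [0..<Suc N])) j = d j" if "j \<le> N" for j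
    using that by (simp add: nth_default_def del: upt_Suc)
  show "degree (Poly (map d [0..<Suc N])) \<le> N"
    by (rule degree_le) (auto simp: nth_default_def del: upt_Suc)
qed

lemma cM_cont: "r0 > 0 \<Longrightarrow> isCont (\<lambda>r. cM \<nu> r k) r0"
  unfolding cM_def by (intro continuous_intros) auto

lemma exists_rep:
  assumes N1: "N \<ge> 1"
    and sets: "sets \<nu> = sets (restrict_space borel (sphere (0::complex) 1))"
    and fin: "finite_measure \<nu>"
    and nz: "emeasure \<nu> (space \<nu>) \<noteq> 0"
  shows "\<exists>r\<in>{0..1}. \<exists>n \<rho> \<phi>. circle_rep N \<nu> r n \<rho> \<phi>"
proof -
  define m0 where "m0 = measure \<nu> (space \<nu>)"
  have "emeasure \<nu> (space \<nu>) = ennreal m0"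
    using finite_measure.emeasure_eq_measure[OF fin] by (simp add: m0_def)
  hence "m0 \<noteq> 0" using nz by auto
  moreover have "m0 \<ge> 0" unfolding m0_def by (rule measure_nonneg)
  ultimately have m0pos: "m0 > 0" by linarith
  have mom0: "circle_moment \<nu> 0 = of_real m0" by (simp add: moment0 m0_def)
  show ?thesis
  proof (cases "\<forall>k\<in>{1..N}. circle_moment \<nu> k = 0")
    case True
    have "circle_rep N \<nu> 0 1 (\<lambda>_. m0) (\<lambda>_. 0)"
      unfolding circle_rep_def ansatz_coeff_def
    proof (intro conjI ballI allI impI)
      fix k assume k: "k \<le> N"
      show "circle_moment \<nu> k = complex_of_real (0 ^ k) *
          (\<Sum>\<alpha>\<in>{1..(1::nat)}. complex_of_real m0 * exp (\<i> * of_nat k * complex_of_real 0))"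
      proof (cases "k = 0")
        case True have "{1..1::nat} = {1}" by auto
        thus ?thesis using mom0 True by simp
      next
        case False thus ?thesis using \<open>\<forall>k\<in>{1..N}. circle_moment \<nu> k = 0\<close> k by simp
      qed
    qed (use N1 m0pos pi_gt_zero in auto)
    thus ?thesis by force
  next
    case False
    then obtain k0 where k0: "1 \<le> k0" "k0 \<le> N" "circle_moment \<nu> k0 \<noteq> 0" by auto
    define m where "m = circle_moment \<nu> k0"
    define psdr where "psdr r \<longleftrightarrow> (\<forall>w. degree w \<le> N \<longrightarrow> 0 \<le> Re (Bf (cM \<nu> r) N w w))" for r
    define R where "R = {r. 0 < r \<and> r \<le> 1 \<and> psdr r}"
    have oneR: "1 \<in> R" unfolding R_def psdr_def Bf_def using QF_nu_psd[OF sets fin] by auto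
    define \<delta> where "\<delta> = cmod m / m0"
    have dpos: "\<delta> > 0" using m0pos k0 by (simp add: \<delta>_def m_def)
    have cM0: "cM \<nu> r 0 = of_real m0" for r by (simp add: cM_def mom0)
    have lower: "\<delta> \<le> r" if "r \<in> R" for r
    proof -
      have r: "0 < r" "r \<le> 1" "psdr r" using that by (auto simp: R_def)
      define u where "u = m / of_real (cmod m)"
      define w where "w = monom (-u) 0 + monom 1 k0"
      have m0': "m \<noteq> 0" using k0 by (simp add: m_def)
      have dw: "degree w \<le> N" unfolding w_def using k0
        by (intro degree_add_le) (auto intro: order.trans[OF degree_monom_le])
      have nm: "of_real (cmod m ^ 2) = m * cnj m" by (rule complex_norm_square)
      have uu: "cnj u * u = 1" "cnj u * m = of_real (cmod m)" "u * cnj m = of_real (cmod m)"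
        using m0' nm by (auto simp: u_def field_simps power2_eq_square)
      have ck: "cM \<nu> r (int k0) = m / of_real (r ^ k0)" "cM \<nu> r (- int k0) = cnj m / of_real (r ^ k0)"
        using k0 by (auto simp: cM_def m_def)
      have "Bf (cM \<nu> r) N w w = cnj u * u * cM \<nu> r 0 - cnj u * cM \<nu> r (int k0) - u * cM \<nu> r (- int k0) + cM \<nu> r 0"
        unfolding w_def using k0 by (simp add: Bf_add_left Bf_add_right Bf_monom)
      also have "\<dots> = of_real (2 * m0 - 2 * cmod m / r ^ k0)"
        unfolding cM0 ck using uu by (simp add: field_simps)
      finally have "0 \<le> 2 * m0 - 2 * cmod m / r ^ k0" using r(3) dw unfolding psdr_def by force
      hence "cmod m / m0 \<le> r ^ k0" using m0pos r(1) by (simp add: field_simps)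
      moreover have "r ^ k0 \<le> r ^ 1" using r k0 by (intro power_decreasing) auto
      ultimately show ?thesis by (simp add: \<delta>_def)
    qed
    define rs where "rs = Inf R"
    have Rne: "R \<noteq> {}" using oneR by auto
    have bdd: "bdd_below R" using lower by (auto simp: bdd_below_def)
    have rs_ge: "\<delta> \<le> rs" unfolding rs_def using Rne lower by (intro cInf_greatest) auto
    have rs_le: "rs \<le> 1" unfolding rs_def using oneR bdd by (rule cInf_lower)
    have rs_pos: "rs > 0" using rs_ge dpos by simp
    have inf_le: "rs \<le> r" if "r \<in> R" for r unfolding rs_def using that bdd by (rule cInf_lower)
    have psd_rs: "psdr rs"
      unfolding psdr_def
    proof (intro allI impI, rule ccontr)
      fix w assume dw: "degree w \<le> N" and neg: "\<not> 0 \<le> Re (Bf (cM \<nu> rs) N w w)"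
      define g where "g r = Re (Bf (cM \<nu> r) N w w)" for r
      have "isCont g rs" unfolding g_def Bf_def QF_def by (rule isCont_Re, intro continuous_intros cM_cont[OF rs_pos])
      moreover have gneg: "- g rs > 0" using neg by (simp add: g_def)
      ultimately obtain \<eta> where \<eta>: "\<eta> > 0" "\<And>r. dist r rs < \<eta> \<Longrightarrow> dist (g r) (g rs) < - g rs"
        unfolding continuous_at_eps_delta by metis
      obtain r where r: "r \<in> R" "r < rs + \<eta>"
        using cInf_less_iff[OF Rne bdd, of "rs + \<eta>"] \<eta>(1) by (auto simp: rs_def)
      have "dist r rs < \<eta>" using inf_le[OF r(1)] r(2) by (simp add: dist_real_def)
      hence "g r < 0" using \<eta>(2)[of r] by (simp add: dist_real_def)
      moreover have "g r \<ge> 0" using r(1) dw by (simp add: R_def psdr_def g_def)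
      ultimately show False by simp
    qed
    have sing: "\<exists>p. p \<noteq> 0 \<and> degree p \<le> N \<and> Bf (cM \<nu> rs) N p p = 0"
    proof (rule ccontr)
      assume ns: "\<not> ?thesis"
      have pd: "Re (QF (cM \<nu> rs) N d d) > 0" if "\<exists>j\<le>N. d j \<noteq> 0" for d
      proof -
        define p where "p = Poly (map d [0..<Suc N])"
        have cp: "\<And>j. j \<le> N \<Longrightarrow> coeff p j = d j" "degree p \<le> N" using poly_of_vec p_def by auto
        have p0: "p \<noteq> 0" using that cp(1) by (metis coeff_0)
        have eq: "QF (cM \<nu> rs) N d d = Bf (cM \<nu> rs) N p p" unfolding Bf_def by (intro QF_cong) (simp add: cp)
        have "Bf (cM \<nu> rs) N p p \<noteq> 0" using ns p0 cp(2) by blast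
        moreover have "Im (Bf (cM \<nu> rs) N p p) = 0" using Bf_real[OF herm_cM] .
        moreover have "Re (Bf (cM \<nu> rs) N p p) \<ge> 0" using psd_rs cp(2) by (simp add: psdr_def)
        ultimately show ?thesis unfolding eq by (simp add: complex_eq_iff less_le)
      qed
      obtain \<eta> where \<eta>: "\<eta> > 0" "\<And>r. \<bar>r - rs\<bar> < \<eta> \<Longrightarrow> (\<forall>d. 0 \<le> Re (QF (cM \<nu> r) N d d))"
        using PD_open[OF cM_cont[OF rs_pos] pd] by blast
      define r where "r = rs - min \<eta> rs / 2"
      have r: "0 < r" "r < rs" "\<bar>r - rs\<bar> < \<eta>" using \<eta>(1) rs_pos by (auto simp: r_def min_def)
      have "r \<in> R" unfolding R_def psdr_def Bf_def using r rs_le \<eta>(2)[OF r(3)] by auto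
      thus False using inf_le r(2) by force
    qed
    then obtain p0 where p0: "p0 \<noteq> 0" "degree p0 \<le> N" "Bf (cM \<nu> rs) N p0 p0 = 0" by blast
    have c0: "cM \<nu> rs 0 \<noteq> 0" using cM0 m0pos by simp
    obtain S \<rho> where S: "finite S" "S \<noteq> {}" "card S \<le> N" "\<forall>\<beta>\<in>S. cmod \<beta> = 1 \<and> \<rho> \<beta> > (0::real)"
        "\<forall>k\<le>N. cM \<nu> rs (int k) = (\<Sum>\<beta>\<in>S. of_real (\<rho> \<beta>) * \<beta> ^ k)"
      using cara[OF herm_cM psd_rs[unfolded psdr_def] c0 p0] by blast
    obtain h where h: "bij_betw h {1..card S} S" using ex_bij_betw_nat_finite_1[OF S(1)] by blast
    define \<phi> where "\<phi> \<alpha> = (if Arg (h \<alpha>) = pi then - pi else Arg (h \<alpha>))" for \<alpha>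
    define \<rho>' where "\<rho>' \<alpha> = \<rho> (h \<alpha>)" for \<alpha>
    have hS: "h \<alpha> \<in> S" if "\<alpha> \<in> {1..card S}" for \<alpha> using h that by (rule bij_betw_apply)
    have "circle_rep N \<nu> rs (card S) \<rho>' \<phi>"
      unfolding circle_rep_def
    proof (intro conjI ballI allI impI)
      show "1 \<le> card S" using S(1,2) by (simp add: Suc_le_eq card_gt_0_iff)
      show "card S \<le> N" by (rule S(3))
      fix \<alpha> assume a: "\<alpha> \<in> {1..card S}"
      show "\<rho>' \<alpha> > 0" using S(4) hS[OF a] by (simp add: \<rho>'_def)
      show "\<phi> \<alpha> \<in> {-pi..<pi}" unfolding \<phi>_def using angle_rep(2) S(4) hS[OF a] by blast
    next
      fix k assume k: "k \<le> N"
      have "circle_moment \<nu> k = of_real (rs ^ k) * cM \<nu> rs (int k)" using rs_pos by (simp add: cM_def)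
      also have "cM \<nu> rs (int k) = (\<Sum>\<beta>\<in>S. of_real (\<rho> \<beta>) * \<beta> ^ k)" using S(5) k by blast
      also have "\<dots> = (\<Sum>\<alpha>\<in>{1..card S}. of_real (\<rho>' \<alpha>) * h \<alpha> ^ k)"
        unfolding \<rho>'_def by (rule sum.reindex_bij_betw[OF h, symmetric])
      also have "\<dots> = (\<Sum>\<alpha>=1..card S. of_real (\<rho>' \<alpha>) * exp (\<i> * of_nat k * of_real (\<phi> \<alpha>)))"
      proof (intro sum.cong refl)
        fix \<alpha> assume a: "\<alpha> \<in> {1..card S}"
        have "exp (\<i> * of_nat k * of_real (\<phi> \<alpha>)) = exp (\<i> * of_real (\<phi> \<alpha>)) ^ k"
          by (subst exp_of_nat_mult[symmetric]) (simp add: mult_ac)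
        also have "exp (\<i> * of_real (\<phi> \<alpha>)) = h \<alpha>" unfolding \<phi>_def using angle_rep(1) S(4) hS[OF a] by blast
        finally show "of_real (\<rho>' \<alpha>) * h \<alpha> ^ k = of_real (\<rho>' \<alpha>) * exp (\<i> * of_nat k * of_real (\<phi> \<alpha>))" by simp
      qed
      finally show "circle_moment \<nu> k = ansatz_coeff rs (card S) \<rho>' \<phi> k" unfolding ansatz_coeff_def .
    qed
    moreover have "rs \<in> {0..1}" using rs_pos rs_le by auto
    ultimately show ?thesis by blast
  qed
qed


lemma ansatz_alt:
  "ansatz_coeff r n \<rho> \<phi> k = of_real (r ^ k) * (\<Sum>\<alpha>=1..n. of_real (\<rho> \<alpha>) * exp (\<i> * of_real (\<phi> \<alpha>)) ^ k)"
  unfolding ansatz_coeff_def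
  by (intro arg_cong2[where f="(*)"] refl sum.cong) (simp_all add: exp_of_nat_mult[symmetric] mult_ac)

lemma rep_cM:
  assumes rep: "circle_rep N \<nu> r n \<rho> \<phi>" and r0: "0 \<le> r" and r'0: "0 < r'"
  shows "\<forall>k. \<bar>k\<bar> \<le> int N \<longrightarrow> cM \<nu> r' k = of_real ((r / r') ^ nat \<bar>k\<bar>) *
     (\<Sum>\<alpha>=1..n. of_real (\<rho> \<alpha>) * (if 0 \<le> k then exp (\<i> * of_real (\<phi> \<alpha>)) ^ nat k
         else cnj (exp (\<i> * of_real (\<phi> \<alpha>))) ^ nat (- k)))"
proof (intro allI impI)
  fix k :: int assume k: "\<bar>k\<bar> \<le> int N"
  define \<omega> where "\<omega> \<alpha> = exp (\<i> * of_real (\<phi> \<alpha>))" for \<alpha>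
  have mom: "circle_moment \<nu> j = of_real (r ^ j) * (\<Sum>\<alpha>=1..n. of_real (\<rho> \<alpha>) * \<omega> \<alpha> ^ j)" if "j \<le> N" for j
    using rep that unfolding circle_rep_def ansatz_alt \<omega>_def by blast
  show "cM \<nu> r' k = of_real ((r / r') ^ nat \<bar>k\<bar>) *
     (\<Sum>\<alpha>=1..n. of_real (\<rho> \<alpha>) * (if 0 \<le> k then exp (\<i> * of_real (\<phi> \<alpha>)) ^ nat k
         else cnj (exp (\<i> * of_real (\<phi> \<alpha>))) ^ nat (- k)))"
  proof (cases "0 \<le> k")
    case True
    have "nat k \<le> N" using k True by auto
    thus ?thesis using True r'0 by (simp add: cM_def mom power_divide \<omega>_def)
  next
    case False
    have "nat (-k) \<le> N" using k False by auto
    thus ?thesis using False r'0 by (simp add: cM_def mom power_divide cnj_sum \<omega>_def)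
  qed
qed

lemma rep_basic:
  assumes rep: "circle_rep N \<nu> r n \<rho> \<phi>"
  shows "1 \<le> n" "n \<le> N" "\<And>\<alpha>. \<alpha> \<in> {1..n} \<Longrightarrow> \<rho> \<alpha> > 0"
    "\<forall>\<alpha>\<in>{1..n}. cmod (exp (\<i> * of_real (\<phi> \<alpha>))) = 1"
  using rep unfolding circle_rep_def by auto

definition nodepoly :: "nat \<Rightarrow> (nat \<Rightarrow> real) \<Rightarrow> complex poly" where
  "nodepoly n \<phi> = (\<Prod>\<alpha>\<in>{1..n}. [:- exp (\<i> * of_real (\<phi> \<alpha>)), 1:])"

lemma nodepoly:
  shows "degree (nodepoly n \<phi>) = n" "coeff (nodepoly n \<phi>) n = 1"
    "\<And>\<alpha>. \<alpha> \<in> {1..n} \<Longrightarrow> poly (nodepoly n \<phi>) (exp (\<i> * of_real (\<phi> \<alpha>))) = 0"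
proof -
  show d: "degree (nodepoly n \<phi>) = n" unfolding nodepoly_def
    by (subst degree_prod_sum_eq) auto
  have "lead_coeff (nodepoly n \<phi>) = 1" unfolding nodepoly_def lead_coeff_prod by simp
  thus "coeff (nodepoly n \<phi>) n = 1" using d by simp
  show "poly (nodepoly n \<phi>) (exp (\<i> * of_real (\<phi> \<alpha>))) = 0" if "\<alpha> \<in> {1..n}" for \<alpha>
    unfolding nodepoly_def poly_prod using that by (intro prod_zero) auto
qed

lemma r_unique_aux:
  assumes rep1: "circle_rep N \<nu> r1 n \<rho> \<phi>" and rep2: "circle_rep N \<nu> r2 n' \<rho>' \<phi>'"
    and r1: "0 \<le> r1" and r12: "r1 < r2"
  shows False
proof -
  have r2: "0 < r2" using r1 r12 by simp
  define p where "p = nodepoly n' \<phi>'"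
  note b1 = rep_basic[OF rep1] and b2 = rep_basic[OF rep2]
  have dp: "degree p \<le> N" using nodepoly(1) b2(2) by (simp add: p_def)
  have "QF (cM \<nu> r2) N (coeff p) (coeff p) =
      (\<Sum>\<beta>=1..n'. of_real (\<rho>' \<beta>) * KM (r2/r2) N (\<lambda>j. coeff p j * exp (\<i> * of_real (\<phi>' \<beta>)) ^ j))"
    using QF_atomic[where \<omega>="\<lambda>\<alpha>. exp (\<i> * of_real (\<phi>' \<alpha>))" and c="cM \<nu> r2" and s="r2/r2"
        and \<rho>=\<rho>' and d="coeff p" and n=n' and N=N] b2(4) rep_cM[OF rep2 _ r2] r2 by simp
  also have "\<dots> = 0"
    using r2 nodepoly(3)[of _ n' \<phi>', folded p_def] by (intro sum.neutral) (simp add: KM_one_poly[OF dp])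
  finally have Q2: "QF (cM \<nu> r2) N (coeff p) (coeff p) = 0" .
  have Q1: "QF (cM \<nu> r2) N (coeff p) (coeff p) =
      (\<Sum>\<alpha>=1..n. of_real (\<rho> \<alpha>) * KM (r1/r2) N (\<lambda>j. coeff p j * exp (\<i> * of_real (\<phi> \<alpha>)) ^ j))"
    using QF_atomic[where \<omega>="\<lambda>\<alpha>. exp (\<i> * of_real (\<phi> \<alpha>))" and c="cM \<nu> r2" and s="r1/r2"
        and \<rho>=\<rho> and d="coeff p" and n=n and N=N] b1(4) rep_cM[OF rep1 r1 r2] by simp
  have s: "0 \<le> r1 / r2" "r1 / r2 < 1" using r1 r12 r2 by auto
  have "Re (QF (cM \<nu> r2) N (coeff p) (coeff p)) > 0"
    unfolding Q1 Re_sum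
  proof (intro sum_pos)
    fix \<alpha> assume a: "\<alpha> \<in> {1..n}"
    have "coeff p n' * exp (\<i> * of_real (\<phi> \<alpha>)) ^ n' \<noteq> 0" using nodepoly(2)[of n' \<phi>', folded p_def] by simp
    hence "Re (KM (r1/r2) N (\<lambda>j. coeff p j * exp (\<i> * of_real (\<phi> \<alpha>)) ^ j)) > 0"
      by (rule KM_pos(1)[OF s b2(2)])
    thus "0 < Re (of_real (\<rho> \<alpha>) * KM (r1/r2) N (\<lambda>j. coeff p j * exp (\<i> * of_real (\<phi> \<alpha>)) ^ j))"
      using b1(3)[OF a] by simp
  qed (use b1(1) in auto)
  thus False using Q2 by simp
qed

lemma rep_lin:
  assumes rep: "circle_rep N \<nu> r n \<rho> \<phi>" and r: "0 < r" and dq: "degree q \<le> N"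
  shows "(\<Sum>\<alpha>=1..n. of_real (\<rho> \<alpha>) * poly q (exp (\<i> * of_real (\<phi> \<alpha>)))) = (\<Sum>j\<le>N. coeff q j * cM \<nu> r (int j))"
proof -
  have c: "cM \<nu> r (int j) = (\<Sum>\<alpha>=1..n. of_real (\<rho> \<alpha>) * exp (\<i> * of_real (\<phi> \<alpha>)) ^ j)" if "j \<le> N" for j
    using rep_cM[OF rep _ r, rule_format, of "int j"] that r by simp
  have "(\<Sum>j\<le>N. coeff q j * cM \<nu> r (int j)) =
        (\<Sum>j\<le>N. \<Sum>\<alpha>=1..n. of_real (\<rho> \<alpha>) * (coeff q j * exp (\<i> * of_real (\<phi> \<alpha>)) ^ j))"
    by (intro sum.cong refl) (simp add: c sum_distrib_left mult_ac)
  also have "\<dots> = (\<Sum>\<alpha>=1..n. \<Sum>j\<le>N. of_real (\<rho> \<alpha>) * (coeff q j * exp (\<i> * of_real (\<phi> \<alpha>)) ^ j))"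
    by (rule sum.swap)
  also have "\<dots> = (\<Sum>\<alpha>=1..n. of_real (\<rho> \<alpha>) * poly q (exp (\<i> * of_real (\<phi> \<alpha>))))"
    by (simp add: poly_sumN[OF dq] sum_distrib_left)
  finally show ?thesis by simp
qed

lemma same_r:
  assumes rep1: "circle_rep N \<nu> r n \<rho> \<phi>" and rep2: "circle_rep N \<nu> r n' \<rho>' \<phi>'" and r0: "0 \<le> r"
  shows "ansatz_coeff r n \<rho> \<phi> k = ansatz_coeff r n' \<rho>' \<phi>' k"
proof (cases "r = 0")
  case True
  have m1: "circle_moment \<nu> 0 = ansatz_coeff r n \<rho> \<phi> 0" "circle_moment \<nu> 0 = ansatz_coeff r n' \<rho>' \<phi>' 0"
    using rep1 rep2 unfolding circle_rep_def by auto
  show ?thesis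
  proof (cases "k = 0")
    case True thus ?thesis using m1 by simp
  next
    case False thus ?thesis using \<open>r = 0\<close> by (simp add: ansatz_coeff_def)
  qed
next
  case False
  hence r: "r > 0" using r0 by simp
  define p where "p = nodepoly n \<phi>"
  note b1 = rep_basic[OF rep1] and b2 = rep_basic[OF rep2]
  have dp: "degree p \<le> N" using nodepoly(1) b1(2) by (simp add: p_def)
  have pne: "p \<noteq> 0" using nodepoly(2)[of n \<phi>] by (auto simp: p_def)
  have "QF (cM \<nu> r) N (coeff p) (coeff p) =
      (\<Sum>\<alpha>=1..n. of_real (\<rho> \<alpha>) * KM (r/r) N (\<lambda>j. coeff p j * exp (\<i> * of_real (\<phi> \<alpha>)) ^ j))"
    using QF_atomic[where \<omega>="\<lambda>\<alpha>. exp (\<i> * of_real (\<phi> \<alpha>))" and c="cM \<nu> r" and s="r/r"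
        and \<rho>=\<rho> and d="coeff p" and n=n and N=N] b1(4) rep_cM[OF rep1 r0 r] by simp
  also have "\<dots> = 0"
    using r nodepoly(3)[of _ n \<phi>, folded p_def] by (intro sum.neutral) (simp add: KM_one_poly[OF dp])
  finally have Q1: "QF (cM \<nu> r) N (coeff p) (coeff p) = 0" .
  have "QF (cM \<nu> r) N (coeff p) (coeff p) =
      (\<Sum>\<beta>=1..n'. of_real (\<rho>' \<beta>) * KM (r/r) N (\<lambda>j. coeff p j * exp (\<i> * of_real (\<phi>' \<beta>)) ^ j))"
    using QF_atomic[where \<omega>="\<lambda>\<alpha>. exp (\<i> * of_real (\<phi>' \<alpha>))" and c="cM \<nu> r" and s="r/r"
        and \<rho>=\<rho>' and d="coeff p" and n=n' and N=N] b2(4) rep_cM[OF rep2 r0 r] by simp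
  also have "\<dots> = (\<Sum>\<beta>=1..n'. of_real (\<rho>' \<beta> * (cmod (poly p (exp (\<i> * of_real (\<phi>' \<beta>)))))^2))"
  proof (intro sum.cong refl)
    fix \<beta>
    have "KM (r/r) N (\<lambda>j. coeff p j * exp (\<i> * of_real (\<phi>' \<beta>)) ^ j) =
          cnj (poly p (exp (\<i> * of_real (\<phi>' \<beta>)))) * poly p (exp (\<i> * of_real (\<phi>' \<beta>)))"
      using r KM_one_poly[OF dp] by simp
    also have "\<dots> = of_real ((cmod (poly p (exp (\<i> * of_real (\<phi>' \<beta>)))))^2)"
      using complex_norm_square[of "poly p (exp (\<i> * of_real (\<phi>' \<beta>)))"] by (simp only: mult.commute)
    finally show "of_real (\<rho>' \<beta>) * KM (r/r) N (\<lambda>j. coeff p j * exp (\<i> * of_real (\<phi>' \<beta>)) ^ j) =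
        of_real (\<rho>' \<beta> * (cmod (poly p (exp (\<i> * of_real (\<phi>' \<beta>)))))^2)" by simp
  qed
  finally have "(\<Sum>\<beta>=1..n'. of_real (\<rho>' \<beta> * (cmod (poly p (exp (\<i> * of_real (\<phi>' \<beta>)))))^2)) = (0::complex)"
    using Q1 by simp
  hence "of_real (\<Sum>\<beta>=1..n'. \<rho>' \<beta> * (cmod (poly p (exp (\<i> * of_real (\<phi>' \<beta>)))))^2) = (0::complex)"
    by (simp only: of_real_sum)
  hence "(\<Sum>\<beta>=1..n'. \<rho>' \<beta> * (cmod (poly p (exp (\<i> * of_real (\<phi>' \<beta>)))))^2) = 0"
    by (simp only: of_real_eq_0_iff)
  hence "\<forall>\<beta>\<in>{1..n'}. \<rho>' \<beta> * (cmod (poly p (exp (\<i> * of_real (\<phi>' \<beta>)))))^2 = 0"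
    using b2(3) by (subst (asm) sum_nonneg_eq_0_iff) (auto simp: less_imp_le)
  hence roots2pre: "\<forall>\<beta>\<in>{Suc 0..n'}. \<rho>' \<beta> = 0 \<or> poly p (exp (\<i> * of_real (\<phi>' \<beta>))) = 0" by simp
  have roots2: "poly p (exp (\<i> * of_real (\<phi>' \<beta>))) = 0" if "\<beta> \<in> {1..n'}" for \<beta>
  proof -
    have "\<beta> \<in> {Suc 0..n'}" using that by simp
    with roots2pre have "\<rho>' \<beta> = 0 \<or> poly p (exp (\<i> * of_real (\<phi>' \<beta>))) = 0" by auto
    thus ?thesis using b2(3)[OF that] by auto
  qed
  define q where "q = monom 1 k mod p"
  have dq: "degree q \<le> N"
    using degree_mod_less[OF pne, of "monom 1 k"] dp by (auto simp: q_def)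
  have qv: "x ^ k = poly q x" if "poly p x = 0" for x
  proof -
    have "monom 1 k = monom 1 k div p * p + q" unfolding q_def by simp
    hence "poly (monom 1 k) x = poly (monom 1 k div p) x * poly p x + poly q x" by (metis poly_add poly_mult)
    thus ?thesis using that by (simp add: poly_monom)
  qed
  have "(\<Sum>\<alpha>=1..n. of_real (\<rho> \<alpha>) * exp (\<i> * of_real (\<phi> \<alpha>)) ^ k) =
        (\<Sum>\<alpha>=1..n. of_real (\<rho> \<alpha>) * poly q (exp (\<i> * of_real (\<phi> \<alpha>))))"
    using qv nodepoly(3)[of _ n \<phi>] by (intro sum.cong refl) (simp add: p_def)
  also have "\<dots> = (\<Sum>j\<le>N. coeff q j * cM \<nu> r (int j))" by (rule rep_lin[OF rep1 r dq])
  also have "\<dots> = (\<Sum>\<beta>=1..n'. of_real (\<rho>' \<beta>) * poly q (exp (\<i> * of_real (\<phi>' \<beta>))))"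
    by (rule rep_lin[OF rep2 r dq, symmetric])
  also have "\<dots> = (\<Sum>\<beta>=1..n'. of_real (\<rho>' \<beta>) * exp (\<i> * of_real (\<phi>' \<beta>)) ^ k)"
    using qv roots2 by (intro sum.cong refl) simp
  finally show ?thesis unfolding ansatz_alt by simp
qed


theorem theorem2p1:
  fixes N :: nat and \<nu> :: "complex measure"
  assumes "N \<ge> 1"
    and "sets \<nu> = sets (restrict_space borel (sphere (0::complex) 1))"
    and "finite_measure \<nu>"
    and "emeasure \<nu> (space \<nu>) \<noteq> 0"
  shows "(\<exists>!r. r \<in> {0..1} \<and> (\<exists>n \<rho> \<phi>. circle_rep N \<nu> r n \<rho> \<phi>)) \<and>
         (\<forall>r n \<rho> \<phi> n' \<rho>' \<phi>'. r \<in> {0..1} \<longrightarrow> circle_rep N \<nu> r n \<rho> \<phi> \<longrightarrow>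
           circle_rep N \<nu> r n' \<rho>' \<phi>' \<longrightarrow>
           (\<forall>k. ansatz_coeff r n \<rho> \<phi> k = ansatz_coeff r n' \<rho>' \<phi>' k))"
proof -
  obtain r0 where r0: "r0 \<in> {0..1}" "\<exists>n \<rho> \<phi>. circle_rep N \<nu> r0 n \<rho> \<phi>"
    using exists_rep[OF assms] by blast
  have un: "r = r0" if r: "r \<in> {0..1}" "\<exists>n \<rho> \<phi>. circle_rep N \<nu> r n \<rho> \<phi>" for r
  proof (rule ccontr)
    assume ne: "r \<noteq> r0"
    obtain n \<rho> \<phi> where A: "circle_rep N \<nu> r n \<rho> \<phi>" using r(2) by blast
    obtain n' \<rho>' \<phi>' where B: "circle_rep N \<nu> r0 n' \<rho>' \<phi>'" using r0(2) by blast
    show False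
    proof (cases "r < r0")
      case True show False by (rule r_unique_aux[OF A B]) (use r(1) True in auto)
    next
      case False
      hence "r0 < r" using ne by simp
      show False by (rule r_unique_aux[OF B A]) (use r0(1) \<open>r0 < r\<close> in auto)
    qed
  qed
  show ?thesis
  proof (intro conjI)
    show "\<exists>!r. r \<in> {0..1} \<and> (\<exists>n \<rho> \<phi>. circle_rep N \<nu> r n \<rho> \<phi>)"
    proof (rule ex1I[of _ r0])
      show "r0 \<in> {0..1} \<and> (\<exists>n \<rho> \<phi>. circle_rep N \<nu> r0 n \<rho> \<phi>)" using r0 by blast
      fix r assume "r \<in> {0..1} \<and> (\<exists>n \<rho> \<phi>. circle_rep N \<nu> r n \<rho> \<phi>)"
      thus "r = r0" using un by blast
    qed
    show "\<forall>r n \<rho> \<phi> n' \<rho>' \<phi>'. r \<in> {0..1} \<longrightarrow> circle_rep N \<nu> r n \<rho> \<phi> \<longrightarrow>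
           circle_rep N \<nu> r n' \<rho>' \<phi>' \<longrightarrow>
           (\<forall>k. ansatz_coeff r n \<rho> \<phi> k = ansatz_coeff r n' \<rho>' \<phi>' k)"
    proof (intro allI impI)
      fix r n \<rho> \<phi> n' \<rho>' \<phi>' k
      assume "r \<in> {0..1::real}" "circle_rep N \<nu> r n \<rho> \<phi>" "circle_rep N \<nu> r n' \<rho>' \<phi>'"
      thus "ansatz_coeff r n \<rho> \<phi> k = ansatz_coeff r n' \<rho>' \<phi>' k"
        by (intro same_r) auto
    qed
  qed
qed


end
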